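(* Let $M$ be a smooth manifold, let $\mathfrak X(M)$ be the Lie algebra of vector fields (with the usual Lie bracket) and consider the 2-term complex $C^\infty(M)\xrightarrow{d}\Omega^1(M)$ given by the de Rham differential. For $X\in\mathfrak X(M)$, $\xi\in\Omega^1(M)$, $f\in C^\infty(M)$ define $\mu_0(X)(\xi)=[\![X,\xi]\!]=L_X\xi-\tfrac12 d(\xi(X))$, $\mu_1(X)(f)=\langle X,df\rangle=\tfrac12 X(f)$, and $\nu:\wedge^2\mathfrak X(M)\to\mathrm{Hom}(\Omega^1(M),C^\infty(M))$ by $\nu(X,Y)(\xi)=T(X,Y,\xi)$, where $T$ is as in the context. Then $(C^\infty(M)\xrightarrow{d}\Omega^1(M),\mu=\mu_0+\mu_1,\nu)$ is a 2-term representation up to homotopy of the Lie algebra $\mathfrak X(M)$.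
   Context: On $\Gamma(TM\oplus T^*M)$ define the pairing $\langle X+\xi,Y+\eta\rangle=\tfrac12(\xi(Y)+\eta(X))$ and the bracket $[\![X+\xi,Y+\eta]\!]=[X,Y]+L_X\eta-L_Y\xi+\tfrac12 d(\xi(Y)-\eta(X))$. Define $T(e_1,e_2,e_3)=\tfrac13\big(\langle[\![e_1,e_2]\!],e_3\rangle+\text{cyclic permutations}\big)$; vector fields and 1-forms are regarded as sections of $TM\oplus T^*M$. A 2-term representation up to homotopy of a Lie algebra $\mathfrak g$ consists of a 2-term complex of vector spaces $V_1\xrightarrow{\mathrm d}V_0$, linear maps $\mu_i:\mathfrak g\to\mathrm{End}(V_i)$ ($i=0,1$) with $\mathrm d\circ\mu_1(X)=\mu_0(X)\circ\mathrm d$ for all $X\in\mathfrak g$, and a linear map $\nu:\wedge^2\mathfrak g\to\mathrm{Hom}(V_0,V_1)$ such that for all $X_1,X_2,X_3\in\mathfrak g$: $\mu_0[X_1,X_2]-[\mu_0(X_1),\mu_0(X_2)]=\mathrm d\circ\nu(X_1,X_2)$; $\mu_1[X_1,X_2]-[\mu_1(X_1),\mu_1(X_2)]=\nu(X_1,X_2)\circ\mathrm d$; and $[\mu_0(X_1)+\mu_1(X_1),\nu(X_2,X_3)]+\text{c.p.}=\nu([X_1,X_2],X_3)+\text{c.p.}$, where $[\mu_0(X)+\mu_1(X),A]=\mu_1(X)\circ A-A\circ\mu_0(X)$ for $A\in\mathrm{Hom}(V_0,V_1)$ and c.p. denotes cyclic permutations of $X_1,X_2,X_3$. One writes $\mu=\mu_0+\mu_1$.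 *)

theory Defs
  imports "HOL-Analysis.Analysis" "HOL-Library.Function_Algebras"
begin

instantiation "fun" :: (type, real_vector) real_vector
begin
definition scaleR_fun :: "real \<Rightarrow> ('a \<Rightarrow> 'b) \<Rightarrow> 'a \<Rightarrow> 'b"
  where "scaleR_fun r f = (\<lambda>x. r *\<^sub>R f x)"
instance by standard (auto simp: scaleR_fun_def fun_eq_iff algebra_simps)
end

fun iter_deriv :: "'a list \<Rightarrow> ('a::real_normed_vector \<Rightarrow> 'b::real_normed_vector) \<Rightarrow> 'a \<Rightarrow> 'b" where
  "iter_deriv [] f = f"
| "iter_deriv (v # vs) f = (\<lambda>x. frechet_derivative (iter_deriv vs f) (at x) v)"

definition smooth_on :: "'a::real_normed_vector set \<Rightarrow> ('a \<Rightarrow> 'b::real_normed_vector) \<Rightarrow> bool" where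
  "smooth_on S f \<longleftrightarrow> open S \<and> (\<forall>vs. \<forall>x\<in>S. iter_deriv vs f differentiable (at x))"

definition smooth_atlas :: "'m topology \<Rightarrow> ('m set \<times> ('m \<Rightarrow> 'a::euclidean_space)) set \<Rightarrow> bool" where
  "smooth_atlas X A \<longleftrightarrow>
     (\<forall>(U, \<phi>)\<in>A. openin X U \<and> open (\<phi> ` U) \<and>
                  homeomorphic_map (subtopology X U) (top_of_set (\<phi> ` U)) \<phi>) \<and>
     (\<Union>(U, \<phi>)\<in>A. U) = topspace X \<and>
     (\<forall>(U, \<phi>)\<in>A. \<forall>(V, \<psi>)\<in>A. smooth_on (\<phi> ` (U \<inter> V)) (\<psi> \<circ> inv_into U \<phi>))"

definition smooth_manifold :: "'m topology \<Rightarrow> ('m set \<times> ('m \<Rightarrow> 'a::euclidean_space)) set \<Rightarrow> bool" where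
  "smooth_manifold X A \<longleftrightarrow> Hausdorff_space X \<and> second_countable X \<and> smooth_atlas X A"

text \<open>C-infinity(M): smooth real functions, extended by 0 outside M.\<close>
definition smooth_fun :: "'m topology \<Rightarrow> ('m set \<times> ('m \<Rightarrow> 'a::euclidean_space)) set \<Rightarrow> ('m \<Rightarrow> real) \<Rightarrow> bool" where
  "smooth_fun X A f \<longleftrightarrow> (\<forall>x. x \<notin> topspace X \<longrightarrow> f x = 0) \<and>
     (\<forall>(U, \<phi>)\<in>A. smooth_on (\<phi> ` U) (f \<circ> inv_into U \<phi>))"

type_synonym 'm vfield = "('m \<Rightarrow> real) \<Rightarrow> ('m \<Rightarrow> real)"
type_synonym 'm oneform = "'m vfield \<Rightarrow> ('m \<Rightarrow> real)"

text \<open>Vector fields, as derivations of C-infinity(M) (zero on non-smooth arguments).\<close>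
definition vector_field :: "'m topology \<Rightarrow> ('m set \<times> ('m \<Rightarrow> 'a::euclidean_space)) set \<Rightarrow> 'm vfield \<Rightarrow> bool" where
  "vector_field X A D \<longleftrightarrow>
     (\<forall>f. smooth_fun X A f \<longrightarrow> smooth_fun X A (D f)) \<and>
     (\<forall>f. \<not> smooth_fun X A f \<longrightarrow> D f = (\<lambda>_. 0)) \<and>
     (\<forall>f g a b. smooth_fun X A f \<longrightarrow> smooth_fun X A g \<longrightarrow>
         D (\<lambda>x. a * f x + b * g x) = (\<lambda>x. a * D f x + b * D g x)) \<and>
     (\<forall>f g. smooth_fun X A f \<longrightarrow> smooth_fun X A g \<longrightarrow>
         D (\<lambda>x. f x * g x) = (\<lambda>x. f x * D g x + D f x * g x))"

text \<open>1-forms, as C-infinity(M)-linear maps from vector fields to C-infinity(M).\<close>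
definition one_form :: "'m topology \<Rightarrow> ('m set \<times> ('m \<Rightarrow> 'a::euclidean_space)) set \<Rightarrow> 'm oneform \<Rightarrow> bool" where
  "one_form X A \<xi> \<longleftrightarrow>
     (\<forall>D. vector_field X A D \<longrightarrow> smooth_fun X A (\<xi> D)) \<and>
     (\<forall>D. \<not> vector_field X A D \<longrightarrow> \<xi> D = (\<lambda>_. 0)) \<and>
     (\<forall>D E f g. vector_field X A D \<longrightarrow> vector_field X A E \<longrightarrow>
        smooth_fun X A f \<longrightarrow> smooth_fun X A g \<longrightarrow>
        \<xi> (\<lambda>h x. f x * D h x + g x * E h x) = (\<lambda>x. f x * \<xi> D x + g x * \<xi> E x))"

definition vf_bracket :: "'m vfield \<Rightarrow> 'm vfield \<Rightarrow> 'm vfield" where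
  "vf_bracket D E = (\<lambda>f x. D (E f) x - E (D f) x)"

definition dR :: "'m topology \<Rightarrow> ('m set \<times> ('m \<Rightarrow> 'a::euclidean_space)) set \<Rightarrow> ('m \<Rightarrow> real) \<Rightarrow> 'm oneform" where
  "dR X A f = (\<lambda>E. if vector_field X A E then E f else (\<lambda>_. 0))"

definition lie_deriv :: "'m topology \<Rightarrow> ('m set \<times> ('m \<Rightarrow> 'a::euclidean_space)) set \<Rightarrow> 'm vfield \<Rightarrow> 'm oneform \<Rightarrow> 'm oneform" where
  "lie_deriv X A D \<xi> = (\<lambda>E. if vector_field X A E then (\<lambda>x. D (\<xi> E) x - \<xi> (vf_bracket D E) x) else (\<lambda>_. 0))"

text \<open>Sections of TM + T*M as pairs (X, xi); the pairing and the (Courant) bracket.\<close>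
definition pairing :: "'m vfield \<times> 'm oneform \<Rightarrow> 'm vfield \<times> 'm oneform \<Rightarrow> 'm \<Rightarrow> real" where
  "pairing e1 e2 = (case e1 of (D, \<xi>) \<Rightarrow> case e2 of (E, \<eta>) \<Rightarrow> (\<lambda>x. (1/2) * (\<xi> E x + \<eta> D x)))"

definition courant :: "'m topology \<Rightarrow> ('m set \<times> ('m \<Rightarrow> 'a::euclidean_space)) set \<Rightarrow>
    'm vfield \<times> 'm oneform \<Rightarrow> 'm vfield \<times> 'm oneform \<Rightarrow> 'm vfield \<times> 'm oneform" where
  "courant X A e1 e2 = (case e1 of (D, \<xi>) \<Rightarrow> case e2 of (E, \<eta>) \<Rightarrow>
     (vf_bracket D E,
      (\<lambda>F x. lie_deriv X A D \<eta> F x - lie_deriv X A E \<xi> F x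
             + (1/2) * dR X A (\<lambda>y. \<xi> E y - \<eta> D y) F x)))"

definition Tform :: "'m topology \<Rightarrow> ('m set \<times> ('m \<Rightarrow> 'a::euclidean_space)) set \<Rightarrow>
    'm vfield \<times> 'm oneform \<Rightarrow> 'm vfield \<times> 'm oneform \<Rightarrow> 'm vfield \<times> 'm oneform \<Rightarrow> 'm \<Rightarrow> real" where
  "Tform X A e1 e2 e3 = (\<lambda>x. (1/3) * (pairing (courant X A e1 e2) e3 x
        + pairing (courant X A e2 e3) e1 x + pairing (courant X A e3 e1) e2 x))"

definition mu0 :: "'m topology \<Rightarrow> ('m set \<times> ('m \<Rightarrow> 'a::euclidean_space)) set \<Rightarrow> 'm vfield \<Rightarrow> 'm oneform \<Rightarrow> 'm oneform" where
  "mu0 X A D \<xi> = snd (courant X A (D, 0) (0, \<xi>))"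

definition mu1 :: "'m topology \<Rightarrow> ('m set \<times> ('m \<Rightarrow> 'a::euclidean_space)) set \<Rightarrow> 'm vfield \<Rightarrow> ('m \<Rightarrow> real) \<Rightarrow> ('m \<Rightarrow> real)" where
  "mu1 X A D f = pairing (D, 0) (0, dR X A f)"

definition nu :: "'m topology \<Rightarrow> ('m set \<times> ('m \<Rightarrow> 'a::euclidean_space)) set \<Rightarrow> 'm vfield \<Rightarrow> 'm vfield \<Rightarrow> 'm oneform \<Rightarrow> ('m \<Rightarrow> real)" where
  "nu X A D E \<xi> = Tform X A (D, 0) (E, 0) (0, \<xi>)"

definition lin_subspace :: "'v::real_vector set \<Rightarrow> bool" where
  "lin_subspace V \<longleftrightarrow> 0 \<in> V \<and> (\<forall>x\<in>V. \<forall>y\<in>V. \<forall>a b. a *\<^sub>R x + b *\<^sub>R y \<in> V)"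

definition lin_on :: "'v::real_vector set \<Rightarrow> ('v \<Rightarrow> 'w::real_vector) \<Rightarrow> bool" where
  "lin_on V f \<longleftrightarrow> (\<forall>x\<in>V. \<forall>y\<in>V. \<forall>a b. f (a *\<^sub>R x + b *\<^sub>R y) = a *\<^sub>R f x + b *\<^sub>R f y)"

definition lie_algebra :: "'g::real_vector set \<Rightarrow> ('g \<Rightarrow> 'g \<Rightarrow> 'g) \<Rightarrow> bool" where
  "lie_algebra g br \<longleftrightarrow> lin_subspace g \<and>
     (\<forall>x\<in>g. \<forall>y\<in>g. br x y \<in> g) \<and>
     (\<forall>z\<in>g. lin_on g (\<lambda>x. br x z)) \<and> (\<forall>z\<in>g. lin_on g (\<lambda>y. br z y)) \<and>
     (\<forall>x\<in>g. br x x = 0) \<and>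
     (\<forall>x\<in>g. \<forall>y\<in>g. \<forall>z\<in>g. br x (br y z) + br y (br z x) + br z (br x y) = 0)"

text \<open>2-term representation up to homotopy (V1 --d--> V0, mu = mu0 + mu1, nu) of (g, br).
  nu is a linear map on the exterior square, i.e. an alternating bilinear map.\<close>
definition two_term_rep_up_to_homotopy ::
  "'g::real_vector set \<Rightarrow> ('g \<Rightarrow> 'g \<Rightarrow> 'g) \<Rightarrow> 'v1::real_vector set \<Rightarrow> 'v0::real_vector set \<Rightarrow>
   ('v1 \<Rightarrow> 'v0) \<Rightarrow> ('g \<Rightarrow> 'v0 \<Rightarrow> 'v0) \<Rightarrow> ('g \<Rightarrow> 'v1 \<Rightarrow> 'v1) \<Rightarrow> ('g \<Rightarrow> 'g \<Rightarrow> 'v0 \<Rightarrow> 'v1) \<Rightarrow> bool" where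
  "two_term_rep_up_to_homotopy g br V1 V0 d m0 m1 n \<longleftrightarrow>
     lie_algebra g br \<and> lin_subspace V1 \<and> lin_subspace V0 \<and>
     (\<forall>w\<in>V1. d w \<in> V0) \<and> lin_on V1 d \<and>
     (\<forall>x\<in>g. (\<forall>v\<in>V0. m0 x v \<in> V0) \<and> lin_on V0 (m0 x)) \<and>
     (\<forall>x\<in>g. (\<forall>w\<in>V1. m1 x w \<in> V1) \<and> lin_on V1 (m1 x)) \<and>
     (\<forall>v\<in>V0. lin_on g (\<lambda>x. m0 x v)) \<and>
     (\<forall>w\<in>V1. lin_on g (\<lambda>x. m1 x w)) \<and>
     (\<forall>x\<in>g. \<forall>y\<in>g. (\<forall>v\<in>V0. n x y v \<in> V1) \<and> lin_on V0 (n x y)) \<and>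
     (\<forall>y\<in>g. \<forall>v\<in>V0. lin_on g (\<lambda>x. n x y v)) \<and>
     (\<forall>x\<in>g. \<forall>v\<in>V0. lin_on g (\<lambda>y. n x y v)) \<and>
     (\<forall>x\<in>g. \<forall>v\<in>V0. n x x v = 0) \<and>
     (\<forall>x\<in>g. \<forall>w\<in>V1. d (m1 x w) = m0 x (d w)) \<and>
     (\<forall>x1\<in>g. \<forall>x2\<in>g. \<forall>v\<in>V0.
        m0 (br x1 x2) v - (m0 x1 (m0 x2 v) - m0 x2 (m0 x1 v)) = d (n x1 x2 v)) \<and>
     (\<forall>x1\<in>g. \<forall>x2\<in>g. \<forall>w\<in>V1.
        m1 (br x1 x2) w - (m1 x1 (m1 x2 w) - m1 x2 (m1 x1 w)) = n x1 x2 (d w)) \<and>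
     (\<forall>x1\<in>g. \<forall>x2\<in>g. \<forall>x3\<in>g. \<forall>v\<in>V0.
        (m1 x1 (n x2 x3 v) - n x2 x3 (m0 x1 v))
      + (m1 x2 (n x3 x1 v) - n x3 x1 (m0 x2 v))
      + (m1 x3 (n x1 x2 v) - n x1 x2 (m0 x3 v))
      = n (br x1 x2) x3 v + n (br x2 x3) x1 v + n (br x3 x1) x2 v)"

end

theory Submission
  imports Defs
begin

lemma fd_local:
  assumes "open S" "x \<in> S" "\<And>y. y \<in> S \<Longrightarrow> f y = g y"
  shows "frechet_derivative f (at x) = frechet_derivative g (at x)"
proof -
  have "\<And>f'. (f has_derivative f') (at x) \<longleftrightarrow> (g has_derivative f') (at x)"
  proof
    fix f' assume "(f has_derivative f') (at x)"
    then show "(g has_derivative f') (at x)"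
      by (rule has_derivative_transform_within_open[OF _ assms(1,2)]) (simp add: assms(3))
  next
    fix f' assume "(g has_derivative f') (at x)"
    then show "(f has_derivative f') (at x)"
      by (rule has_derivative_transform_within_open[OF _ assms(1,2)]) (simp add: assms(3))
  qed
  then show ?thesis unfolding frechet_derivative_def by simp
qed

lemma diff_local:
  assumes "open S" "x \<in> S" "\<And>y. y \<in> S \<Longrightarrow> f y = g y" "f differentiable (at x)"
  shows "g differentiable (at x)"
  using assms(4) unfolding differentiable_def
  using has_derivative_transform_within_open[OF _ assms(1,2), of f _ UNIV g] assms(3) by blast

lemma iter_deriv_local:
  assumes "open S" "\<And>y. y \<in> S \<Longrightarrow> f y = g y"
  shows "x \<in> S \<Longrightarrow> iter_deriv vs f x = iter_deriv vs g x"
proof (induction vs arbitrary: x)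
  case Nil then show ?case using assms by simp
next
  case (Cons v vs)
  have "frechet_derivative (iter_deriv vs f) (at x) = frechet_derivative (iter_deriv vs g) (at x)"
    using fd_local[OF assms(1) Cons.prems] Cons.IH by blast
  then show ?case by simp
qed

lemma iter_deriv_snoc:
  "iter_deriv (vs @ [v]) f = iter_deriv vs (\<lambda>x. frechet_derivative f (at x) v)"
  by (induction vs) auto

definition smooth_upto :: "nat \<Rightarrow> 'a::real_normed_vector set \<Rightarrow> ('a \<Rightarrow> real) \<Rightarrow> bool" where
  "smooth_upto n S f \<longleftrightarrow> (\<forall>vs. length vs \<le> n \<longrightarrow> (\<forall>x\<in>S. iter_deriv vs f differentiable (at x)))"

lemma smooth_on_upto: "smooth_on S f \<longleftrightarrow> open S \<and> (\<forall>n. smooth_upto n S f)"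
  unfolding smooth_on_def smooth_upto_def by auto

lemma smooth_upto_local:
  assumes "open S" "\<And>y. y \<in> S \<Longrightarrow> f y = g y" "smooth_upto n S f"
  shows "smooth_upto n S g"
  unfolding smooth_upto_def
proof (intro allI impI ballI)
  fix vs :: "'a list" and x assume l: "length vs \<le> n" and x: "x \<in> S"
  show "iter_deriv vs g differentiable (at x)"
  proof (rule diff_local[OF assms(1) x, of "iter_deriv vs f"])
    show "\<And>y. y \<in> S \<Longrightarrow> iter_deriv vs f y = iter_deriv vs g y"
      by (rule iter_deriv_local[OF assms(1,2)])
    show "iter_deriv vs f differentiable (at x)"
      using assms(3) l x unfolding smooth_upto_def by blast
  qed
qed

lemma smooth_on_local:
  fixes f g :: "'a::real_normed_vector \<Rightarrow> real"
  assumes eq: "\<And>y. y \<in> S \<Longrightarrow> f y = g y" and sm: "smooth_on S f"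
  shows "smooth_on S g"
  unfolding smooth_on_def
proof (intro conjI allI ballI)
  show S: "open S" using sm unfolding smooth_on_def by simp
  fix vs :: "'a list" and x assume x: "x \<in> S"
  show "iter_deriv vs g differentiable (at x)"
  proof (rule diff_local[OF S x, of "iter_deriv vs f"])
    show "\<And>y. y \<in> S \<Longrightarrow> iter_deriv vs f y = iter_deriv vs g y"
      by (rule iter_deriv_local[OF S eq])
    show "iter_deriv vs f differentiable (at x)"
      using sm x unfolding smooth_on_def by blast
  qed
qed

lemma lin_upto:
  fixes f g :: "'a::real_normed_vector \<Rightarrow> real"
  assumes S: "open S" and f: "smooth_upto n S f" and g: "smooth_upto n S g"
  shows "smooth_upto n S (\<lambda>x. a * f x + b * g x)"
proof -
  have eq: "length vs \<le> n \<Longrightarrow> x \<in> S \<Longrightarrow>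
      iter_deriv vs (\<lambda>x. a * f x + b * g x) x = a * iter_deriv vs f x + b * iter_deriv vs g x" for vs x
  proof (induction vs arbitrary: x)
    case Nil then show ?case by simp
  next
    case (Cons v vs)
    have l: "length vs \<le> n" using Cons.prems by simp
    have "frechet_derivative (iter_deriv vs (\<lambda>x. a * f x + b * g x)) (at x)
        = frechet_derivative (\<lambda>y. a * iter_deriv vs f y + b * iter_deriv vs g y) (at x)"
      by (rule fd_local[OF S Cons.prems(2)]) (rule Cons.IH[OF l])
    also have "\<dots> = (\<lambda>h. a * frechet_derivative (iter_deriv vs f) (at x) h
                    + b * frechet_derivative (iter_deriv vs g) (at x) h)"
    proof (rule frechet_derivative_at[symmetric])
      have df: "iter_deriv vs f differentiable (at x)" "iter_deriv vs g differentiable (at x)"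
        using f g l Cons.prems(2) unfolding smooth_upto_def by auto
      show "((\<lambda>y. a * iter_deriv vs f y + b * iter_deriv vs g y) has_derivative
          (\<lambda>h. a * frechet_derivative (iter_deriv vs f) (at x) h
                    + b * frechet_derivative (iter_deriv vs g) (at x) h)) (at x)"
        by (intro has_derivative_add has_derivative_mult_right
              df(1)[unfolded frechet_derivative_works] df(2)[unfolded frechet_derivative_works])
    qed
    finally show ?case by simp
  qed
  show ?thesis unfolding smooth_upto_def
  proof (intro allI impI ballI)
    fix vs :: "'a list" and x assume l: "length vs \<le> n" and x: "x \<in> S"
    have df: "iter_deriv vs f differentiable (at x)" "iter_deriv vs g differentiable (at x)"
      using f g l x unfolding smooth_upto_def by auto
    show "iter_deriv vs (\<lambda>x. a * f x + b * g x) differentiable (at x)"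
    proof (rule diff_local[OF S x, of "\<lambda>y. a * iter_deriv vs f y + b * iter_deriv vs g y"])
      show "\<And>y. y \<in> S \<Longrightarrow> a * iter_deriv vs f y + b * iter_deriv vs g y =
          iter_deriv vs (\<lambda>x. a * f x + b * g x) y"
        using eq[OF l] by simp
      show "(\<lambda>y. a * iter_deriv vs f y + b * iter_deriv vs g y) differentiable (at x)"
        using df by (auto intro!: derivative_intros)
    qed
  qed
qed

lemma smooth_on_lin:
  fixes f g :: "'a::real_normed_vector \<Rightarrow> real"
  shows "smooth_on S f \<Longrightarrow> smooth_on S g \<Longrightarrow> smooth_on S (\<lambda>x. a * f x + b * g x)"
  unfolding smooth_on_upto using lin_upto by blast

lemma smooth_on_deriv:
  assumes "smooth_on S f" shows "smooth_on S (\<lambda>x. frechet_derivative f (at x) v)"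
  using assms unfolding smooth_on_def iter_deriv_snoc[symmetric] by blast

lemma smooth_on_diff: "smooth_on S f \<Longrightarrow> x \<in> S \<Longrightarrow> f differentiable (at x)"
  unfolding smooth_on_def by (metis iter_deriv.simps(1))

lemma mult_upto:
  fixes f g :: "'a::real_normed_vector \<Rightarrow> real"
  shows "smooth_on S f \<Longrightarrow> smooth_on S g \<Longrightarrow> smooth_upto n S (\<lambda>x. f x * g x)"
proof (induction n arbitrary: f g)
  case 0
  then show ?case unfolding smooth_upto_def
    using smooth_on_diff[of S f] smooth_on_diff[of S g] by (auto intro!: differentiable_mult)
next
  case (Suc n)
  have S: "open S" using Suc.prems unfolding smooth_on_def by auto
  show ?case unfolding smooth_upto_def
  proof (intro allI impI ballI)
    fix vs :: "'a list" and x assume l: "length vs \<le> Suc n" and x: "x \<in> S"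
    show "iter_deriv vs (\<lambda>x. f x * g x) differentiable (at x)"
    proof (cases "length vs \<le> n")
      case True then show ?thesis using Suc.IH[OF Suc.prems] x unfolding smooth_upto_def by auto
    next
      case False
      have "vs \<noteq> []" using False by auto
      then obtain ws v where vs: "vs = ws @ [v]" by (metis rev_exhaust)
      have lw: "length ws = n" using l False vs by simp
      define Df where "Df = (\<lambda>x. frechet_derivative f (at x) v)"
      define Dg where "Dg = (\<lambda>x. frechet_derivative g (at x) v)"
      have loc: "frechet_derivative (\<lambda>x. f x * g x) (at y) v = 1 * (f y * Dg y) + 1 * (Df y * g y)"
        if y: "y \<in> S" for y
      proof -
        have "((\<lambda>x. f x * g x) has_derivative
           (\<lambda>h. f y * frechet_derivative g (at y) h + frechet_derivative f (at y) h * g y)) (at y)"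
          by (rule has_derivative_mult)
             (use smooth_on_diff[OF Suc.prems(1) y] smooth_on_diff[OF Suc.prems(2) y] in
               \<open>simp_all add: frechet_derivative_works\<close>)
        from frechet_derivative_at[OF this] show ?thesis
          unfolding Df_def Dg_def by (metis (mono_tags, lifting) mult_1)
      qed
      have u: "smooth_upto n S (\<lambda>y. 1 * (f y * Dg y) + 1 * (Df y * g y))"
      proof (rule lin_upto[OF S])
        show "smooth_upto n S (\<lambda>y. f y * Dg y)"
          by (rule Suc.IH[OF Suc.prems(1)]) (unfold Dg_def, rule smooth_on_deriv[OF Suc.prems(2)])
        show "smooth_upto n S (\<lambda>y. Df y * g y)"
          by (rule Suc.IH[OF _ Suc.prems(2)]) (unfold Df_def, rule smooth_on_deriv[OF Suc.prems(1)])
      qed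
      have "iter_deriv ws (\<lambda>y. 1 * (f y * Dg y) + 1 * (Df y * g y)) differentiable (at x)"
        using u lw x unfolding smooth_upto_def by auto
      moreover have "\<And>y. y \<in> S \<Longrightarrow> iter_deriv ws (\<lambda>y. 1 * (f y * Dg y) + 1 * (Df y * g y)) y
          = iter_deriv ws (\<lambda>x. frechet_derivative (\<lambda>x. f x * g x) (at x) v) y"
        by (rule iter_deriv_local[OF S]) (simp_all add: loc)
      ultimately show ?thesis unfolding vs iter_deriv_snoc
        by (rule diff_local[OF S x, rotated])
    qed
  qed
qed

lemma smooth_on_mult:
  fixes f g :: "'a::real_normed_vector \<Rightarrow> real"
  shows "smooth_on S f \<Longrightarrow> smooth_on S g \<Longrightarrow> smooth_on S (\<lambda>x. f x * g x)"
  using mult_upto unfolding smooth_on_upto by blast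

lemma iter_deriv_const: "iter_deriv vs (\<lambda>_. c) = (\<lambda>_. if vs = [] then c else 0)"
  by (induction vs) auto

lemma smooth_on_const: "open S \<Longrightarrow> smooth_on S (\<lambda>_. c)"
  unfolding smooth_on_def iter_deriv_const by auto


context
  fixes X :: "'m topology" and A :: "('m set \<times> ('m \<Rightarrow> 'a::euclidean_space)) set"
  assumes M: "smooth_manifold X A"
begin

lemma chart: "(U, \<phi>) \<in> A \<Longrightarrow> U \<subseteq> topspace X \<and> open (\<phi> ` U)"
  using M unfolding smooth_manifold_def smooth_atlas_def by (auto dest: openin_subset)

lemma sf_out: "smooth_fun X A f \<Longrightarrow> x \<notin> topspace X \<Longrightarrow> f x = 0"
  unfolding smooth_fun_def by auto

lemma sf_lin: "smooth_fun X A f \<Longrightarrow> smooth_fun X A g \<Longrightarrow> smooth_fun X A (\<lambda>x. a * f x + b * g x)"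
  unfolding smooth_fun_def
proof (intro conjI allI impI ballI)
  fix p assume f: "(\<forall>x. x \<notin> topspace X \<longrightarrow> f x = 0) \<and> (\<forall>(U, \<phi>)\<in>A. smooth_on (\<phi> ` U) (f \<circ> inv_into U \<phi>))"
    and g: "(\<forall>x. x \<notin> topspace X \<longrightarrow> g x = 0) \<and> (\<forall>(U, \<phi>)\<in>A. smooth_on (\<phi> ` U) (g \<circ> inv_into U \<phi>))"
    and pA: "p \<in> A"
  obtain U \<phi> where p: "p = (U, \<phi>)" by (cases p) auto
  have "smooth_on (\<phi> ` U) (f \<circ> inv_into U \<phi>)" "smooth_on (\<phi> ` U) (g \<circ> inv_into U \<phi>)"
    using f g pA p by auto
  from smooth_on_lin[of "\<phi> ` U" "f \<circ> inv_into U \<phi>" "g \<circ> inv_into U \<phi>" a b, OF this] show "case p of (U, \<phi>) \<Rightarrow> smooth_on (\<phi> ` U) ((\<lambda>x. a * f x + b * g x) \<circ> inv_into U \<phi>)"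
    using p by (simp add: o_def)
qed auto

lemma sf_mult: "smooth_fun X A f \<Longrightarrow> smooth_fun X A g \<Longrightarrow> smooth_fun X A (\<lambda>x. f x * g x)"
  unfolding smooth_fun_def
proof (intro conjI allI impI ballI)
  fix p assume f: "(\<forall>x. x \<notin> topspace X \<longrightarrow> f x = 0) \<and> (\<forall>(U, \<phi>)\<in>A. smooth_on (\<phi> ` U) (f \<circ> inv_into U \<phi>))"
    and g: "(\<forall>x. x \<notin> topspace X \<longrightarrow> g x = 0) \<and> (\<forall>(U, \<phi>)\<in>A. smooth_on (\<phi> ` U) (g \<circ> inv_into U \<phi>))"
    and pA: "p \<in> A"
  obtain U \<phi> where p: "p = (U, \<phi>)" by (cases p) auto
  have "smooth_on (\<phi> ` U) (f \<circ> inv_into U \<phi>)" "smooth_on (\<phi> ` U) (g \<circ> inv_into U \<phi>)"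
    using f g pA p by auto
  from smooth_on_mult[of "\<phi> ` U" "f \<circ> inv_into U \<phi>" "g \<circ> inv_into U \<phi>", OF this] show "case p of (U, \<phi>) \<Rightarrow> smooth_on (\<phi> ` U) ((\<lambda>x. f x * g x) \<circ> inv_into U \<phi>)"
    using p by (simp add: o_def)
qed auto

lemma sf_const: "smooth_fun X A (\<lambda>x. if x \<in> topspace X then c else 0)"
  unfolding smooth_fun_def
proof (intro conjI allI impI ballI)
  fix p assume "p \<in> A"
  then obtain U \<phi> where p: "p = (U, \<phi>)" "(U, \<phi>) \<in> A" by (cases p) auto
  have "smooth_on (\<phi> ` U) ((\<lambda>x. if x \<in> topspace X then c else 0) \<circ> inv_into U \<phi>)"
  proof (rule smooth_on_local[of _ "\<lambda>_. c"])
    show "smooth_on (\<phi> ` U) (\<lambda>_. c)" using chart[OF p(2)] smooth_on_const by blast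
    fix y assume "y \<in> \<phi> ` U"
    then have "inv_into U \<phi> y \<in> U" by (rule inv_into_into)
    then show "c = ((\<lambda>x. if x \<in> topspace X then c else 0) \<circ> inv_into U \<phi>) y"
      using chart[OF p(2)] by auto
  qed
  then show "case p of (U, \<phi>) \<Rightarrow> smooth_on (\<phi> ` U) ((\<lambda>x. if x \<in> topspace X then c else 0) \<circ> inv_into U \<phi>)"
    using p by simp
qed auto

lemma sf_zero[simp]: "smooth_fun X A (\<lambda>_. 0)"
  using sf_const[of 0] by simp

lemma sf_add[simp]: "smooth_fun X A f \<Longrightarrow> smooth_fun X A g \<Longrightarrow> smooth_fun X A (\<lambda>x. f x + g x)"
  using sf_lin[of f g 1 1] by simp
lemma sf_diff[simp]: "smooth_fun X A f \<Longrightarrow> smooth_fun X A g \<Longrightarrow> smooth_fun X A (\<lambda>x. f x - g x)"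
  using sf_lin[of f g 1 "-1"] by simp
lemma sf_cmult[simp]: "smooth_fun X A f \<Longrightarrow> smooth_fun X A (\<lambda>x. c * f x)"
  using sf_lin[of f f c 0] by simp
lemma sf_uminus[simp]: "smooth_fun X A f \<Longrightarrow> smooth_fun X A (\<lambda>x. - f x)"
  using sf_lin[of f f "-1" 0] by simp
lemmas sf_mult'[simp] = sf_mult
lemma sf_divide[simp]: "smooth_fun X A f \<Longrightarrow> smooth_fun X A (\<lambda>x. f x / c)"
  using sf_lin[of f f "1/c" 0] by simp

abbreviation "VF \<equiv> vector_field X A"
abbreviation "SF \<equiv> smooth_fun X A"
abbreviation "OF1 \<equiv> one_form X A"

lemma vf_sf: "VF D \<Longrightarrow> SF (D f)"
  unfolding vector_field_def by (cases "SF f") auto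

lemma vf_nonsf: "VF D \<Longrightarrow> \<not> SF f \<Longrightarrow> D f = (\<lambda>_. 0)"
  unfolding vector_field_def by auto

lemma vf_out: "VF D \<Longrightarrow> x \<notin> topspace X \<Longrightarrow> D f x = 0"
  using vf_sf sf_out by blast

lemma vf_lin: "VF D \<Longrightarrow> SF f \<Longrightarrow> SF g \<Longrightarrow> D (\<lambda>x. a * f x + b * g x) = (\<lambda>x. a * D f x + b * D g x)"
  unfolding vector_field_def by blast

lemma vf_mult: "VF D \<Longrightarrow> SF f \<Longrightarrow> SF g \<Longrightarrow> D (\<lambda>x. f x * g x) = (\<lambda>x. f x * D g x + D f x * g x)"
  unfolding vector_field_def by blast

lemma vf_add: "VF D \<Longrightarrow> SF f \<Longrightarrow> SF g \<Longrightarrow> D (\<lambda>x. f x + g x) = (\<lambda>x. D f x + D g x)"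
  using vf_lin[of D f g 1 1] by simp
lemma vf_diff: "VF D \<Longrightarrow> SF f \<Longrightarrow> SF g \<Longrightarrow> D (\<lambda>x. f x - g x) = (\<lambda>x. D f x - D g x)"
  using vf_lin[of D f g 1 "-1"] by simp
lemma vf_cmult: "VF D \<Longrightarrow> SF f \<Longrightarrow> D (\<lambda>x. c * f x) = (\<lambda>x. c * D f x)"
  using vf_lin[of D f f c 0] by simp
lemma vf_uminus: "VF D \<Longrightarrow> SF f \<Longrightarrow> D (\<lambda>x. - f x) = (\<lambda>x. - D f x)"
  using vf_lin[of D f f "-1" 0] by simp
lemma vf_divide: "VF D \<Longrightarrow> SF f \<Longrightarrow> D (\<lambda>x. f x / c) = (\<lambda>x. D f x / c)"
  using vf_lin[of D f f "1/c" 0] by simp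
lemma vf_zero_arg: "VF D \<Longrightarrow> D (\<lambda>_. 0) = (\<lambda>_. 0)"
  using vf_lin[of D "\<lambda>_. 0" "\<lambda>_. 0" 0 0] by simp

lemmas vf_rules = vf_sf vf_add vf_diff vf_cmult vf_uminus vf_mult vf_zero_arg vf_divide

lemma vf_bracket_app: "vf_bracket D E f x = D (E f) x - E (D f) x"
  by (simp add: vf_bracket_def)

lemma vf_comb_vf:
  assumes f: "SF f" and g: "SF g" and D: "VF D" and E: "VF E"
  shows "VF (\<lambda>h x. f x * D h x + g x * E h x)"
  unfolding vector_field_def
proof (intro conjI allI impI)
  note r = vf_rules[OF D] vf_rules[OF E]
  fix u assume "SF u" then show "SF (\<lambda>x. f x * D u x + g x * E u x)" using f g r by simp
next
  fix u assume "\<not> SF u" then show "(\<lambda>x. f x * D u x + g x * E u x) = (\<lambda>_. 0)"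
    using vf_nonsf[OF D] vf_nonsf[OF E] by simp
next
  note r = vf_rules[OF D] vf_rules[OF E]
  fix u w a b assume u: "SF u" and w: "SF w"
  show "(\<lambda>x. f x * D (\<lambda>x. a * u x + b * w x) x + g x * E (\<lambda>x. a * u x + b * w x) x) =
          (\<lambda>x. a * (f x * D u x + g x * E u x) + b * (f x * D w x + g x * E w x))"
    using u w by (simp add: vf_lin[OF D] vf_lin[OF E] algebra_simps)
next
  fix u w assume u: "SF u" and w: "SF w"
  show "(\<lambda>x. f x * D (\<lambda>x. u x * w x) x + g x * E (\<lambda>x. u x * w x) x) =
          (\<lambda>x. u x * (f x * D w x + g x * E w x) + (f x * D u x + g x * E u x) * w x)"
    using u w by (simp add: vf_mult[OF D] vf_mult[OF E] algebra_simps)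
qed

definition cst :: "real \<Rightarrow> 'm \<Rightarrow> real" where
  "cst c = (\<lambda>x. if x \<in> topspace X then c else 0)"

lemma sf_cst: "SF (cst c)"
  unfolding cst_def by (rule sf_const)

lemma cst_eq: "VF D \<Longrightarrow> VF E \<Longrightarrow>
  (\<lambda>h x. a * D h x + b * E h x) = (\<lambda>h x. cst a x * D h x + cst b x * E h x)"
  by (auto simp: cst_def fun_eq_iff vf_out)

lemma vf_lin_vf: "VF D \<Longrightarrow> VF E \<Longrightarrow> VF (\<lambda>h x. a * D h x + b * E h x)"
proof -
  assume D: "VF D" and E: "VF E"
  have "VF (\<lambda>h x. cst a x * D h x + cst b x * E h x)"
    by (rule vf_comb_vf[OF sf_cst sf_cst D E])
  then show ?thesis by (simp only: cst_eq[OF D E, symmetric])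
qed

lemma vf_add_vf[simp]: "VF D \<Longrightarrow> VF E \<Longrightarrow> VF (\<lambda>h x. D h x + E h x)"
  using vf_lin_vf[of D E 1 1] by simp
lemma vf_diff_vf[simp]: "VF D \<Longrightarrow> VF E \<Longrightarrow> VF (\<lambda>h x. D h x - E h x)"
  using vf_lin_vf[of D E 1 "-1"] by simp
lemma vf_cmult_vf[simp]: "VF D \<Longrightarrow> VF (\<lambda>h x. c * D h x)"
  using vf_lin_vf[of D D c 0] by simp
lemma vf_uminus_vf[simp]: "VF D \<Longrightarrow> VF (\<lambda>h x. - D h x)"
  using vf_lin_vf[of D D "-1" 0] by simp

lemma vf_bracket_vf[simp]:
  assumes D: "VF D" and E: "VF E" shows "VF (vf_bracket D E)"
  unfolding vector_field_def
proof (intro conjI allI impI)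
  note r = vf_rules[OF D] vf_rules[OF E]
  fix u assume "SF u" then show "SF (vf_bracket D E u)"
    using r by (simp add: vf_bracket_def)
next
  fix u assume "\<not> SF u" then show "vf_bracket D E u = (\<lambda>_. 0)"
    using vf_nonsf[OF D] vf_nonsf[OF E] vf_zero_arg[OF D] vf_zero_arg[OF E]
    by (simp add: vf_bracket_def)
next
  note r = vf_rules[OF D] vf_rules[OF E]
  fix u w a b assume u: "SF u" and w: "SF w"
  show "vf_bracket D E (\<lambda>x. a * u x + b * w x) =
          (\<lambda>x. a * vf_bracket D E u x + b * vf_bracket D E w x)"
    using u w r by (simp add: vf_bracket_def vf_lin[OF D] vf_lin[OF E] algebra_simps)
next
  note r = vf_rules[OF D] vf_rules[OF E]
  fix u w assume u: "SF u" and w: "SF w"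
  show "vf_bracket D E (\<lambda>x. u x * w x) =
          (\<lambda>x. u x * vf_bracket D E w x + vf_bracket D E u x * w x)"
    using u w r by (simp add: vf_bracket_def algebra_simps)
qed

lemma vf_zero_vf: "VF (\<lambda>h x. 0)"
  unfolding vector_field_def by simp

lemma of_sf: "OF1 \<xi> \<Longrightarrow> VF D \<Longrightarrow> SF (\<xi> D)"
  unfolding one_form_def by blast

lemma of_nonvf: "OF1 \<xi> \<Longrightarrow> \<not> VF D \<Longrightarrow> \<xi> D = (\<lambda>_. 0)"
  unfolding one_form_def by blast

lemma of_comb: "OF1 \<xi> \<Longrightarrow> VF D \<Longrightarrow> VF E \<Longrightarrow> SF f \<Longrightarrow> SF g \<Longrightarrow>
   \<xi> (\<lambda>h x. f x * D h x + g x * E h x) = (\<lambda>x. f x * \<xi> D x + g x * \<xi> E x)"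
  unfolding one_form_def by blast

lemma of_lin: assumes xi: "OF1 \<xi>" and D: "VF D" and E: "VF E"
  shows "\<xi> (\<lambda>h x. a * D h x + b * E h x) = (\<lambda>x. a * \<xi> D x + b * \<xi> E x)"
proof -
  have "\<xi> (\<lambda>h x. a * D h x + b * E h x) = (\<lambda>x. cst a x * \<xi> D x + cst b x * \<xi> E x)"
    unfolding cst_eq[OF D E] by (rule of_comb[OF xi D E sf_cst sf_cst])
  also have "\<dots> = (\<lambda>x. a * \<xi> D x + b * \<xi> E x)"
    using sf_out[OF of_sf[OF xi D]] sf_out[OF of_sf[OF xi E]] by (auto simp: cst_def fun_eq_iff)
  finally show ?thesis .
qed

lemma of_add: "OF1 \<xi> \<Longrightarrow> VF D \<Longrightarrow> VF E \<Longrightarrow> \<xi> (\<lambda>h x. D h x + E h x) = (\<lambda>x. \<xi> D x + \<xi> E x)"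
  using of_lin[of \<xi> D E 1 1] by simp
lemma of_diff: "OF1 \<xi> \<Longrightarrow> VF D \<Longrightarrow> VF E \<Longrightarrow> \<xi> (\<lambda>h x. D h x - E h x) = (\<lambda>x. \<xi> D x - \<xi> E x)"
  using of_lin[of \<xi> D E 1 "-1"] by simp
lemma of_cmult: "OF1 \<xi> \<Longrightarrow> VF D \<Longrightarrow> \<xi> (\<lambda>h x. c * D h x) = (\<lambda>x. c * \<xi> D x)"
  using of_lin[of \<xi> D D c 0] by simp
lemma of_uminus: "OF1 \<xi> \<Longrightarrow> VF D \<Longrightarrow> \<xi> (\<lambda>h x. - D h x) = (\<lambda>x. - \<xi> D x)"
  using of_lin[of \<xi> D D "-1" 0] by simp
lemma of_zero: "OF1 \<xi> \<Longrightarrow> \<xi> (\<lambda>h x. 0) = (\<lambda>x. 0)"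
  using of_lin[of \<xi> "\<lambda>h x. 0" "\<lambda>h x. 0" 0 0] vf_zero_vf by simp

lemmas of_rules = of_sf of_add of_diff of_cmult of_uminus of_zero

lemma bracket_swap: "vf_bracket E D = (\<lambda>h x. - vf_bracket D E h x)"
  by (simp add: fun_eq_iff vf_bracket_app)

lemma of_swap: "OF1 \<xi> \<Longrightarrow> VF D \<Longrightarrow> VF E \<Longrightarrow> \<xi> (vf_bracket E D) = (\<lambda>x. - \<xi> (vf_bracket D E) x)"
proof -
  assume xi: "OF1 \<xi>" and D: "VF D" and E: "VF E"
  have "\<xi> (vf_bracket E D) = \<xi> (\<lambda>h x. - vf_bracket D E h x)"
    by (simp only: bracket_swap[of E D])
  also have "\<dots> = (\<lambda>x. - \<xi> (vf_bracket D E) x)"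
    by (rule of_uminus[OF xi vf_bracket_vf[OF D E]])
  finally show ?thesis .
qed


lemma dR_app: "VF F \<Longrightarrow> dR X A f F = F f"
  by (simp add: dR_def)
lemma dR_nonvf: "\<not> VF F \<Longrightarrow> dR X A f F = (\<lambda>_. 0)"
  by (simp add: dR_def)

lemma mu0_fun: assumes D: "VF D" and xi: "OF1 \<xi>" and F: "VF F"
  shows "mu0 X A D \<xi> F = (\<lambda>x. D (\<xi> F) x - \<xi> (vf_bracket D F) x - 1/2 * F (\<xi> D) x)"
  using vf_rules[OF F] of_sf[OF xi D] F
  by (simp add: mu0_def courant_def lie_deriv_def dR_def fun_eq_iff)

lemma mu0_nonvf: "\<not> VF F \<Longrightarrow> mu0 X A D \<xi> F = (\<lambda>_. 0)"
  by (simp add: mu0_def courant_def lie_deriv_def dR_def fun_eq_iff)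

lemma mu1_fun: "VF D \<Longrightarrow> mu1 X A D f = (\<lambda>x. 1/2 * D f x)"
  by (simp add: mu1_def pairing_def dR_def fun_eq_iff)

lemma nu_fun: assumes D: "VF D" and E: "VF E" and xi: "OF1 \<xi>"
  shows "nu X A D E \<xi> = (\<lambda>x. 1/2 * \<xi> (vf_bracket D E) x + 1/4 * E (\<xi> D) x - 1/4 * D (\<xi> E) x)"
  using vf_rules[OF D] vf_rules[OF E] of_sf[OF xi D] of_sf[OF xi E] D E of_swap[OF xi D E]
    vf_zero_arg[OF D, folded zero_fun_def] vf_zero_arg[OF E, folded zero_fun_def]
  apply (simp add: nu_def Tform_def pairing_def courant_def lie_deriv_def dR_def fun_eq_iff)
  apply (rule allI)
  apply (thin_tac "_")+
  apply (simp add: field_simps)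
  done


lemma vf_comb_vf'[simp]: "SF f \<Longrightarrow> SF g \<Longrightarrow> VF D \<Longrightarrow> VF E \<Longrightarrow> VF (\<lambda>h x. f x * D h x + g x * E h x)"
  by (rule vf_comb_vf)

lemma OF_dR: assumes f: "SF f" shows "OF1 (dR X A f)"
  unfolding one_form_def
proof (intro conjI allI impI)
  fix D assume "VF D" then show "SF (dR X A f D)" by (simp add: dR_app vf_sf)
next
  fix D assume "\<not> VF D" then show "dR X A f D = (\<lambda>_. 0)" by (simp add: dR_nonvf)
next
  fix D E u g assume D: "VF D" and E: "VF E" and u: "SF u" and g: "SF g"
  show "dR X A f (\<lambda>h x. u x * D h x + g x * E h x) = (\<lambda>x. u x * dR X A f D x + g x * dR X A f E x)"
    using D E u g by (simp add: dR_app)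
qed

lemma OF_mu0: assumes D: "VF D" and xi: "OF1 \<xi>" shows "OF1 (mu0 X A D \<xi>)"
  unfolding one_form_def
proof (intro conjI allI impI)
  fix F assume F: "VF F"
  show "SF (mu0 X A D \<xi> F)"
    unfolding mu0_fun[OF D xi F]
    using vf_rules[OF D] vf_rules[OF F] of_sf[OF xi D] of_sf[OF xi F] of_sf[OF xi vf_bracket_vf[OF D F]]
    by simp
next
  fix F assume "\<not> VF F" then show "mu0 X A D \<xi> F = (\<lambda>_. 0)" by (rule mu0_nonvf)
next
  fix F G f g assume F: "VF F" and G: "VF G" and f: "SF f" and g: "SF g"
  define H where "H = (\<lambda>h x. f x * F h x + g x * G h x)"
  have VH: "VF H" unfolding H_def using F G f g by simp
  define K1 where "K1 = (\<lambda>h x. f x * vf_bracket D F h x + D f x * F h x)"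
  define K2 where "K2 = (\<lambda>h x. g x * vf_bracket D G h x + D g x * G h x)"
  have VK1: "VF K1" unfolding K1_def by (rule vf_comb_vf[OF f vf_sf[OF D] vf_bracket_vf[OF D F] F])
  have VK2: "VF K2" unfolding K2_def by (rule vf_comb_vf[OF g vf_sf[OF D] vf_bracket_vf[OF D G] G])
  have br: "vf_bracket D H = (\<lambda>h x. K1 h x + K2 h x)"
  proof (intro ext)
    fix h x
    show "vf_bracket D H h x = K1 h x + K2 h x"
    proof (cases "SF h")
      case True
      then show ?thesis unfolding H_def K1_def K2_def
        using vf_rules[OF D] vf_rules[OF F] vf_rules[OF G] f g
        by (simp add: algebra_simps vf_bracket_app)
    next
      case False
      then show ?thesis unfolding H_def K1_def K2_def
        using vf_nonsf[OF D False] vf_nonsf[OF F False] vf_nonsf[OF G False]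
          vf_zero_arg[OF D] vf_zero_arg[OF F] vf_zero_arg[OF G]
        by (simp add: vf_bracket_app)
    qed
  qed
  have xiH: "\<xi> H = (\<lambda>x. f x * \<xi> F x + g x * \<xi> G x)"
    unfolding H_def by (rule of_comb[OF xi F G f g])
  have xiK1: "\<xi> K1 = (\<lambda>x. f x * \<xi> (vf_bracket D F) x + D f x * \<xi> F x)"
    unfolding K1_def by (rule of_comb[OF xi vf_bracket_vf[OF D F] F f vf_sf[OF D]])
  have xiK2: "\<xi> K2 = (\<lambda>x. g x * \<xi> (vf_bracket D G) x + D g x * \<xi> G x)"
    unfolding K2_def by (rule of_comb[OF xi vf_bracket_vf[OF D G] G g vf_sf[OF D]])
  have xibr: "\<xi> (vf_bracket D H) = (\<lambda>x. \<xi> K1 x + \<xi> K2 x)"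
    unfolding br by (rule of_add[OF xi VK1 VK2])
  have DxiH: "D (\<xi> H) = (\<lambda>x. f x * D (\<xi> F) x + D f x * \<xi> F x + (g x * D (\<xi> G) x + D g x * \<xi> G x))"
    unfolding xiH using vf_rules[OF D] f g of_sf[OF xi F] of_sf[OF xi G] by simp
  have "mu0 X A D \<xi> H = (\<lambda>x. f x * mu0 X A D \<xi> F x + g x * mu0 X A D \<xi> G x)"
    unfolding mu0_fun[OF D xi VH] mu0_fun[OF D xi F] mu0_fun[OF D xi G] DxiH xibr xiK1 xiK2
    by (simp add: H_def fun_eq_iff algebra_simps)
  then show "mu0 X A D \<xi> (\<lambda>h x. f x * F h x + g x * G h x) =
       (\<lambda>x. f x * mu0 X A D \<xi> F x + g x * mu0 X A D \<xi> G x)" unfolding H_def .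
qed


lemma comb2: "a *\<^sub>R (D :: 'x \<Rightarrow> 'y \<Rightarrow> real) + b *\<^sub>R E = (\<lambda>h x. a * D h x + b * E h x)"
  by (simp add: fun_eq_iff scaleR_fun_def)
lemma comb1: "a *\<^sub>R (f :: 'x \<Rightarrow> real) + b *\<^sub>R g = (\<lambda>x. a * f x + b * g x)"
  by (simp add: fun_eq_iff scaleR_fun_def)

lemma br_lin_left: assumes D: "VF D" and E: "VF E" and F: "VF F"
  shows "vf_bracket (\<lambda>h x. a * D h x + b * E h x) F = (\<lambda>h x. a * vf_bracket D F h x + b * vf_bracket E F h x)"
proof (intro ext)
  fix h x
  show "vf_bracket (\<lambda>h x. a * D h x + b * E h x) F h x = a * vf_bracket D F h x + b * vf_bracket E F h x"
  proof (cases "SF h")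
    case True then show ?thesis
      using vf_lin[OF F, of "D h" "E h" a b] vf_sf[OF D] vf_sf[OF E]
      by (simp add: vf_bracket_app algebra_simps)
  next
    case False then show ?thesis
      using vf_nonsf[OF D False] vf_nonsf[OF E False] vf_nonsf[OF F False] vf_zero_arg[OF F]
        vf_zero_arg[OF D] vf_zero_arg[OF E]
      by (simp add: vf_bracket_app)
  qed
qed

lemma br_lin_right: assumes D: "VF D" and E: "VF E" and F: "VF F"
  shows "vf_bracket F (\<lambda>h x. a * D h x + b * E h x) = (\<lambda>h x. a * vf_bracket F D h x + b * vf_bracket F E h x)"
proof (intro ext)
  fix h x
  show "vf_bracket F (\<lambda>h x. a * D h x + b * E h x) h x = a * vf_bracket F D h x + b * vf_bracket F E h x"
  proof (cases "SF h")
    case True then show ?thesis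
      using vf_lin[OF F, of "D h" "E h" a b] vf_sf[OF D] vf_sf[OF E]
      by (simp add: vf_bracket_app algebra_simps)
  next
    case False then show ?thesis
      using vf_nonsf[OF D False] vf_nonsf[OF E False] vf_nonsf[OF F False] vf_zero_arg[OF F]
        vf_zero_arg[OF D] vf_zero_arg[OF E]
      by (simp add: vf_bracket_app)
  qed
qed

lemma br_jacobi: assumes D: "VF D" and E: "VF E" and F: "VF F"
  shows "vf_bracket (vf_bracket D E) F = (\<lambda>h x. vf_bracket D (vf_bracket E F) h x - vf_bracket E (vf_bracket D F) h x)"
proof (intro ext)
  fix h x
  show "vf_bracket (vf_bracket D E) F h x = vf_bracket D (vf_bracket E F) h x - vf_bracket E (vf_bracket D F) h x"
    using vf_rules[OF D] vf_rules[OF E] vf_rules[OF F]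
    by (simp add: vf_bracket_def algebra_simps)
qed

lemma of_jacobi: assumes xi: "OF1 \<xi>" and D: "VF D" and E: "VF E" and F: "VF F"
  shows "\<xi> (vf_bracket (vf_bracket D E) F) = (\<lambda>x. \<xi> (vf_bracket D (vf_bracket E F)) x - \<xi> (vf_bracket E (vf_bracket D F)) x)"
  unfolding br_jacobi[OF D E F] by (rule of_diff[OF xi]) (simp_all add: D E F)

lemma lie_alg: "lie_algebra {D. VF D} vf_bracket"
  unfolding lie_algebra_def lin_subspace_def lin_on_def Ball_def mem_Collect_eq comb2
proof (intro conjI allI impI)
  show "VF 0" using vf_zero_vf by (simp add: zero_fun_def)
next
  fix D E a b assume "VF D" "VF E" then show "VF (\<lambda>h x. a * D h x + b * E h x)" by (rule vf_lin_vf)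
next
  fix D E assume "VF D" "VF E" then show "VF (vf_bracket D E)" by simp
next
  fix F D E a b assume "VF F" "VF D" "VF E"
  then show "vf_bracket (\<lambda>h x. a * D h x + b * E h x) F = (\<lambda>h x. a * vf_bracket D F h x + b * vf_bracket E F h x)"
    by (intro br_lin_left)
next
  fix F D E a b assume "VF F" "VF D" "VF E"
  then show "vf_bracket F (\<lambda>h x. a * D h x + b * E h x) = (\<lambda>h x. a * vf_bracket F D h x + b * vf_bracket F E h x)"
    by (intro br_lin_right)
next
  fix D show "vf_bracket D D = 0" by (simp add: fun_eq_iff vf_bracket_app)
next
  fix D E F assume D: "VF D" and E: "VF E" and F: "VF F"
  show "vf_bracket D (vf_bracket E F) + vf_bracket E (vf_bracket F D) + vf_bracket F (vf_bracket D E) = 0"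
  proof (intro ext)
    fix f x
    show "(vf_bracket D (vf_bracket E F) + vf_bracket E (vf_bracket F D) + vf_bracket F (vf_bracket D E)) f x = 0 f x"
      using vf_rules[OF D] vf_rules[OF E] vf_rules[OF F]
      by (simp add: vf_bracket_def algebra_simps)
  qed
qed

lemma OF_lin: assumes xi: "OF1 \<xi>" and eta: "OF1 \<eta>"
  shows "OF1 (\<lambda>D x. a * \<xi> D x + b * \<eta> D x)"
  unfolding one_form_def
proof (intro conjI allI impI)
  fix D assume "VF D" then show "SF (\<lambda>x. a * \<xi> D x + b * \<eta> D x)"
    using of_sf[OF xi] of_sf[OF eta] by (simp add: sf_lin)
next
  fix D assume "\<not> VF D" then show "(\<lambda>x. a * \<xi> D x + b * \<eta> D x) = (\<lambda>_. 0)"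
    using of_nonvf[OF xi] of_nonvf[OF eta] by simp
next
  fix D E f g assume "VF D" "VF E" "SF f" "SF g"
  then show "(\<lambda>x. a * \<xi> (\<lambda>h x. f x * D h x + g x * E h x) x + b * \<eta> (\<lambda>h x. f x * D h x + g x * E h x) x) =
       (\<lambda>x. f x * (a * \<xi> D x + b * \<eta> D x) + g x * (a * \<xi> E x + b * \<eta> E x))"
    using of_comb[OF xi] of_comb[OF eta] by (simp add: algebra_simps)
qed

lemma OF_zero: "OF1 0"
  unfolding one_form_def by (simp add: zero_fun_def)

lemma SF_space: "lin_subspace {f. SF f}"
  unfolding lin_subspace_def comb1 Ball_def mem_Collect_eq using sf_lin by (simp add: zero_fun_def)

lemma OF_space: "lin_subspace {\<xi>. OF1 \<xi>}"
  unfolding lin_subspace_def comb2 Ball_def mem_Collect_eq using OF_lin OF_zero by blast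


lemma dR_lin: "lin_on {f. SF f} (dR X A)"
  unfolding lin_on_def Ball_def mem_Collect_eq comb1 comb2
proof (intro allI impI ext)
  fix f g a b F x assume f: "SF f" and g: "SF g"
  show "dR X A (\<lambda>x. a * f x + b * g x) F x = a * dR X A f F x + b * dR X A g F x"
    by (cases "VF F") (simp_all add: dR_app dR_nonvf vf_lin f g)
qed

lemma mu0_lin_v: assumes D: "VF D" shows "lin_on {\<xi>. OF1 \<xi>} (mu0 X A D)"
  unfolding lin_on_def Ball_def mem_Collect_eq comb2
proof (intro allI impI ext)
  fix \<xi> \<eta> a b F x assume xi: "OF1 \<xi>" and eta: "OF1 \<eta>"
  show "mu0 X A D (\<lambda>h x. a * \<xi> h x + b * \<eta> h x) F x = a * mu0 X A D \<xi> F x + b * mu0 X A D \<eta> F x"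
  proof (cases "VF F")
    case True
    then show ?thesis
      using OF_lin[OF xi eta, of a b] of_sf[OF xi] of_sf[OF eta] vf_rules[OF D] vf_rules[OF True] D
      by (simp add: mu0_fun xi eta algebra_simps)
  qed (simp add: mu0_nonvf)
qed

lemma mu1_sf: "VF D \<Longrightarrow> SF (mu1 X A D w)"
  by (simp add: mu1_fun vf_sf)

lemma mu1_lin_v: assumes D: "VF D" shows "lin_on {f. SF f} (mu1 X A D)"
  unfolding lin_on_def Ball_def mem_Collect_eq comb1
  by (simp add: mu1_fun D vf_lin algebra_simps)

lemma mu0_lin_g: assumes xi: "OF1 \<xi>" shows "lin_on {D. VF D} (\<lambda>D. mu0 X A D \<xi>)"
  unfolding lin_on_def Ball_def mem_Collect_eq comb2
proof (intro allI impI ext)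
  fix D E a b F x assume D: "VF D" and E: "VF E"
  have DE: "VF (\<lambda>h x. a * D h x + b * E h x)" by (rule vf_lin_vf[OF D E])
  show "mu0 X A (\<lambda>h x. a * D h x + b * E h x) \<xi> F x = a * mu0 X A D \<xi> F x + b * mu0 X A E \<xi> F x"
  proof (cases "VF F")
    case True
    have xb: "\<xi> (vf_bracket (\<lambda>h x. a * D h x + b * E h x) F) = (\<lambda>x. a * \<xi> (vf_bracket D F) x + b * \<xi> (vf_bracket E F) x)"
      unfolding br_lin_left[OF D E True] by (rule of_lin[OF xi]) (simp_all add: D E True)
    show ?thesis
      using of_lin[OF xi D E, of a b] of_sf[OF xi] vf_rules[OF True] D E
      by (simp add: mu0_fun[OF DE xi True] mu0_fun[OF D xi True] mu0_fun[OF E xi True] xb algebra_simps)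
  qed (simp add: mu0_nonvf)
qed

lemma mu1_lin_g: "lin_on {D. VF D} (\<lambda>D. mu1 X A D w)"
  unfolding lin_on_def Ball_def mem_Collect_eq comb2 comb1
  by (simp add: mu1_fun vf_lin_vf algebra_simps)

lemma nu_sf: "VF D \<Longrightarrow> VF E \<Longrightarrow> OF1 \<xi> \<Longrightarrow> SF (nu X A D E \<xi>)"
  by (simp add: nu_fun vf_sf of_sf)

lemma nu_lin_v: assumes D: "VF D" and E: "VF E" shows "lin_on {\<xi>. OF1 \<xi>} (nu X A D E)"
  unfolding lin_on_def Ball_def mem_Collect_eq comb2 comb1
proof (intro allI impI ext)
  fix \<xi> \<eta> a b x assume xi: "OF1 \<xi>" and eta: "OF1 \<eta>"
  show "nu X A D E (\<lambda>h x. a * \<xi> h x + b * \<eta> h x) x = a * nu X A D E \<xi> x + b * nu X A D E \<eta> x"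
    using OF_lin[OF xi eta, of a b] of_sf[OF xi] of_sf[OF eta] vf_rules[OF D] vf_rules[OF E] D E
    by (simp add: nu_fun xi eta algebra_simps)
qed

lemma nu_lin_x: assumes F: "VF F" and xi: "OF1 \<xi>" shows "lin_on {D. VF D} (\<lambda>D. nu X A D F \<xi>)"
  unfolding lin_on_def Ball_def mem_Collect_eq comb2 comb1
proof (intro allI impI ext)
  fix D E a b x assume D: "VF D" and E: "VF E"
  have DE: "VF (\<lambda>h x. a * D h x + b * E h x)" by (rule vf_lin_vf[OF D E])
  have xb: "\<xi> (vf_bracket (\<lambda>h x. a * D h x + b * E h x) F) = (\<lambda>x. a * \<xi> (vf_bracket D F) x + b * \<xi> (vf_bracket E F) x)"
    unfolding br_lin_left[OF D E F] by (rule of_lin[OF xi]) (simp_all add: D E F)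
  show "nu X A (\<lambda>h x. a * D h x + b * E h x) F \<xi> x = a * nu X A D F \<xi> x + b * nu X A E F \<xi> x"
    using of_lin[OF xi D E, of a b] of_sf[OF xi] vf_rules[OF F] D E F
    by (simp add: nu_fun[OF DE F xi] nu_fun[OF D F xi] nu_fun[OF E F xi] xb algebra_simps)
qed

lemma nu_lin_y: assumes F: "VF F" and xi: "OF1 \<xi>" shows "lin_on {D. VF D} (\<lambda>D. nu X A F D \<xi>)"
  unfolding lin_on_def Ball_def mem_Collect_eq comb2 comb1
proof (intro allI impI ext)
  fix D E a b x assume D: "VF D" and E: "VF E"
  have DE: "VF (\<lambda>h x. a * D h x + b * E h x)" by (rule vf_lin_vf[OF D E])
  have xb: "\<xi> (vf_bracket F (\<lambda>h x. a * D h x + b * E h x)) = (\<lambda>x. a * \<xi> (vf_bracket F D) x + b * \<xi> (vf_bracket F E) x)"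
    unfolding br_lin_right[OF D E F] by (rule of_lin[OF xi]) (simp_all add: D E F)
  show "nu X A F (\<lambda>h x. a * D h x + b * E h x) \<xi> x = a * nu X A F D \<xi> x + b * nu X A F E \<xi> x"
    using of_lin[OF xi D E, of a b] of_sf[OF xi] vf_rules[OF F] D E F
    by (simp add: nu_fun[OF F DE xi] nu_fun[OF F D xi] nu_fun[OF F E xi] xb algebra_simps)
qed

lemma nu_diag: assumes D: "VF D" and xi: "OF1 \<xi>" shows "nu X A D D \<xi> = 0"
proof -
  have "vf_bracket D D = (\<lambda>h x. 0)" by (simp add: fun_eq_iff vf_bracket_app)
  then have "\<xi> (vf_bracket D D) = (\<lambda>x. 0)" using of_zero[OF xi] by simp
  then show ?thesis by (simp add: nu_fun[OF D D xi] fun_eq_iff)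
qed

lemma d_commute: assumes D: "VF D" and f: "SF f" shows "dR X A (mu1 X A D f) = mu0 X A D (dR X A f)"
proof (intro ext)
  fix F x
  show "dR X A (mu1 X A D f) F x = mu0 X A D (dR X A f) F x"
  proof (cases "VF F")
    case True
    then show ?thesis
      using vf_rules[OF True] vf_sf[OF D]
      by (simp add: mu1_fun[OF D] mu0_fun[OF D OF_dR[OF f] True] dR_app vf_bracket_app D)
  qed (simp add: dR_nonvf mu0_nonvf)
qed


lemma big1: assumes X1: "VF X1" and X2: "VF X2" and xi: "OF1 \<xi>"
  shows "mu0 X A (vf_bracket X1 X2) \<xi> - (mu0 X A X1 (mu0 X A X2 \<xi>) - mu0 X A X2 (mu0 X A X1 \<xi>))
         = dR X A (nu X A X1 X2 \<xi>)"
proof (intro ext)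
  fix F x
  show "(mu0 X A (vf_bracket X1 X2) \<xi> - (mu0 X A X1 (mu0 X A X2 \<xi>) - mu0 X A X2 (mu0 X A X1 \<xi>))) F x
        = dR X A (nu X A X1 X2 \<xi>) F x"
  proof (cases "VF F")
    case F: True
    have X12: "VF (vf_bracket X1 X2)" using X1 X2 by simp
    have X1F: "VF (vf_bracket X1 F)" using X1 F by simp
    have X2F: "VF (vf_bracket X2 F)" using X2 F by simp
    note r = vf_rules[OF X1] vf_rules[OF X2] vf_rules[OF F] vf_rules[OF X12] vf_rules[OF X1F] vf_rules[OF X2F]
      of_sf[OF xi] OF_mu0[OF X1 xi] OF_mu0[OF X2 xi]
      of_sf[OF OF_mu0[OF X1 xi]] of_sf[OF OF_mu0[OF X2 xi]]
    show ?thesis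
      using r X1 X2 F X12 X1F X2F
      apply (simp add: mu0_fun xi nu_fun dR_app of_jacobi[OF xi X1 X2 F] of_swap[OF xi X1 X2] vf_bracket_app)
      apply (thin_tac "_")+
      apply (simp add: field_simps)
      done
  qed (simp add: dR_nonvf mu0_nonvf)
qed

lemma big2: assumes X1: "VF X1" and X2: "VF X2" and w: "SF w"
  shows "mu1 X A (vf_bracket X1 X2) w - (mu1 X A X1 (mu1 X A X2 w) - mu1 X A X2 (mu1 X A X1 w))
         = nu X A X1 X2 (dR X A w)"
proof (intro ext)
  fix x
  have X12: "VF (vf_bracket X1 X2)" using X1 X2 by simp
  show "(mu1 X A (vf_bracket X1 X2) w - (mu1 X A X1 (mu1 X A X2 w) - mu1 X A X2 (mu1 X A X1 w))) x
         = nu X A X1 X2 (dR X A w) x"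
    using vf_rules[OF X1] vf_rules[OF X2] X1 X2 X12
    by (simp add: mu1_fun nu_fun OF_dR[OF w] dR_app vf_bracket_app)
qed

lemma big3: assumes X1: "VF X1" and X2: "VF X2" and X3: "VF X3" and xi: "OF1 \<xi>"
  shows "(mu1 X A X1 (nu X A X2 X3 \<xi>) - nu X A X2 X3 (mu0 X A X1 \<xi>))
      + (mu1 X A X2 (nu X A X3 X1 \<xi>) - nu X A X3 X1 (mu0 X A X2 \<xi>))
      + (mu1 X A X3 (nu X A X1 X2 \<xi>) - nu X A X1 X2 (mu0 X A X3 \<xi>))
      = nu X A (vf_bracket X1 X2) X3 \<xi> + nu X A (vf_bracket X2 X3) X1 \<xi> + nu X A (vf_bracket X3 X1) X2 \<xi>"
proof (intro ext)
  fix x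
  have X12: "VF (vf_bracket X1 X2)" and X23: "VF (vf_bracket X2 X3)" and X31: "VF (vf_bracket X3 X1)"
    using X1 X2 X3 by simp_all
  have J: "\<xi> (vf_bracket X1 (vf_bracket X2 X3)) x + \<xi> (vf_bracket X2 (vf_bracket X3 X1)) x
      + \<xi> (vf_bracket X3 (vf_bracket X1 X2)) x = 0"
  proof -
    have "vf_bracket X1 (vf_bracket X2 X3) + vf_bracket X2 (vf_bracket X3 X1) + vf_bracket X3 (vf_bracket X1 X2) = 0"
      using lie_alg X1 X2 X3 unfolding lie_algebra_def by simp
    then have e: "(\<lambda>h x. vf_bracket X1 (vf_bracket X2 X3) h x + vf_bracket X2 (vf_bracket X3 X1) h x
       + vf_bracket X3 (vf_bracket X1 X2) h x) = (\<lambda>h x. 0)"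
      by (simp add: fun_eq_iff)
    have "\<xi> (\<lambda>h x. vf_bracket X1 (vf_bracket X2 X3) h x + vf_bracket X2 (vf_bracket X3 X1) h x
       + vf_bracket X3 (vf_bracket X1 X2) h x) = (\<lambda>x. \<xi> (vf_bracket X1 (vf_bracket X2 X3)) x
       + \<xi> (vf_bracket X2 (vf_bracket X3 X1)) x + \<xi> (vf_bracket X3 (vf_bracket X1 X2)) x)"
      by (subst of_add[OF xi], simp_all add: X1 X2 X3, subst of_add[OF xi], simp_all add: X1 X2 X3)
    then show ?thesis unfolding e of_zero[OF xi] by (simp add: fun_eq_iff)
  qed
  have J': "\<xi> (vf_bracket X3 (vf_bracket X1 X2)) x = - \<xi> (vf_bracket X1 (vf_bracket X2 X3)) x - \<xi> (vf_bracket X2 (vf_bracket X3 X1)) x"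
    using J by linarith
  have S1: "\<xi> (vf_bracket (vf_bracket X1 X2) X3) x = - \<xi> (vf_bracket X3 (vf_bracket X1 X2)) x"
    using of_swap[OF xi X3 X12] by simp
  have S2: "\<xi> (vf_bracket (vf_bracket X2 X3) X1) x = - \<xi> (vf_bracket X1 (vf_bracket X2 X3)) x"
    using of_swap[OF xi X1 X23] by simp
  have S3: "\<xi> (vf_bracket (vf_bracket X3 X1) X2) x = - \<xi> (vf_bracket X2 (vf_bracket X3 X1)) x"
    using of_swap[OF xi X2 X31] by simp
  note r = vf_rules[OF X1] vf_rules[OF X2] vf_rules[OF X3] vf_rules[OF X12] vf_rules[OF X23] vf_rules[OF X31]
      of_sf[OF xi] OF_mu0[OF X1 xi] OF_mu0[OF X2 xi] OF_mu0[OF X3 xi]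
      of_sf[OF OF_mu0[OF X1 xi]] of_sf[OF OF_mu0[OF X2 xi]] of_sf[OF OF_mu0[OF X3 xi]]
  show "((mu1 X A X1 (nu X A X2 X3 \<xi>) - nu X A X2 X3 (mu0 X A X1 \<xi>))
      + (mu1 X A X2 (nu X A X3 X1 \<xi>) - nu X A X3 X1 (mu0 X A X2 \<xi>))
      + (mu1 X A X3 (nu X A X1 X2 \<xi>) - nu X A X1 X2 (mu0 X A X3 \<xi>))) x
      = (nu X A (vf_bracket X1 X2) X3 \<xi> + nu X A (vf_bracket X2 X3) X1 \<xi> + nu X A (vf_bracket X3 X1) X2 \<xi>) x"
    apply (simp add: r X1 X2 X3 X12 X23 X31 mu0_fun mu1_fun xi nu_fun of_swap[OF xi X3 X1] of_swap[OF xi X1 X2] of_swap[OF xi X2 X3]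
       vf_bracket_app)
    apply (simp only: S1 S2 S3)
    apply (simp only: J')
    apply (simp add: field_simps)
    done
qed


end

theorem mainTheorem1:
  fixes X :: "'m topology" and A :: "('m set \<times> ('m \<Rightarrow> 'a::euclidean_space)) set"
  assumes "smooth_manifold X A"
  shows "two_term_rep_up_to_homotopy
           {D. vector_field X A D} vf_bracket
           {f. smooth_fun X A f} {\<xi>. one_form X A \<xi>}
           (dR X A) (mu0 X A) (mu1 X A) (nu X A)"
  unfolding two_term_rep_up_to_homotopy_def
  apply (intro conjI ballI)
  apply (simp_all add: lie_alg[OF assms] SF_space[OF assms] OF_space[OF assms] OF_dR[OF assms]
    dR_lin[OF assms] OF_mu0[OF assms] mu0_lin_v[OF assms] mu1_sf[OF assms] mu1_lin_v[OF assms]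
    mu0_lin_g[OF assms] mu1_lin_g[OF assms] nu_sf[OF assms] nu_lin_v[OF assms] nu_lin_x[OF assms]
    nu_lin_y[OF assms] nu_diag[OF assms] d_commute[OF assms] big1[OF assms] big2[OF assms] big3[OF assms])
  done

end
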